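(* Let $R$ be a unique factorization domain of finite character and of Krull dimension $2$. Then every prime ideal of $R$ is radically perfect.
   Context: All rings are commutative with identity. A ring $R$ is of finite character if every nonzero element of $R$ is contained in only finitely many maximal ideals. An ideal $I$ of $R$ is called radically perfect if $\mathrm{ht}(I)=\inf\{n \mid \sqrt{I}=\sqrt{(\theta_1,\dots,\theta_n)} \text{ for some } \theta_1,\dots,\theta_n\in R\}$, and moreover, if $\mathrm{ht}(I)=0$, then $\sqrt{I}=\sqrt{(\theta)}$ for some zero divisor $\theta$ of $R$. *)

theory Defs
  imports "HOL-Computational_Algebra.Factorial_Ring" "HOL-Library.Extended_Nat"
begin

definition is_ideal :: "'a::comm_ring_1 set \<Rightarrow> bool" where
  "is_ideal I \<longleftrightarrow> 0 \<in> I \<and> (\<forall>x\<in>I. \<forall>y\<in>I. x + y \<in> I) \<and> (\<forall>r. \<forall>x\<in>I. r * x \<in> I)"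

definition prime_ideal :: "'a::comm_ring_1 set \<Rightarrow> bool" where
  "prime_ideal P \<longleftrightarrow> is_ideal P \<and> P \<noteq> UNIV \<and> (\<forall>a b. a * b \<in> P \<longrightarrow> a \<in> P \<or> b \<in> P)"

definition maximal_ideal :: "'a::comm_ring_1 set \<Rightarrow> bool" where
  "maximal_ideal M \<longleftrightarrow> is_ideal M \<and> M \<noteq> UNIV \<and>
     (\<forall>J. is_ideal J \<and> M \<subseteq> J \<longrightarrow> J = M \<or> J = UNIV)"

definition ideal_gen :: "'a::comm_ring_1 set \<Rightarrow> 'a set" where
  "ideal_gen S = \<Inter>{J. is_ideal J \<and> S \<subseteq> J}"

definition radical :: "'a::comm_ring_1 set \<Rightarrow> 'a set" where
  "radical I = {x. \<exists>n. x ^ n \<in> I}"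

definition zero_divisor :: "'a::comm_ring_1 \<Rightarrow> bool" where
  "zero_divisor a \<longleftrightarrow> (\<exists>b. b \<noteq> 0 \<and> a * b = 0)"

definition prime_chain :: "nat \<Rightarrow> (nat \<Rightarrow> 'a::comm_ring_1 set) \<Rightarrow> bool" where
  "prime_chain n f \<longleftrightarrow> (\<forall>i\<le>n. prime_ideal (f i)) \<and> (\<forall>i<n. f i \<subset> f (Suc i))"

definition prime_height :: "'a::comm_ring_1 set \<Rightarrow> enat" where
  "prime_height P = Sup {enat n | n. \<exists>f. prime_chain n f \<and> f n = P}"

definition ideal_height :: "'a::comm_ring_1 set \<Rightarrow> enat" where
  "ideal_height I = Inf {prime_height P | P. prime_ideal P \<and> I \<subseteq> P}"

definition krull_dim :: "'a::comm_ring_1 itself \<Rightarrow> enat" where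
  "krull_dim _ = Sup {enat n | n. \<exists>f::nat \<Rightarrow> 'a set. prime_chain n f}"

definition finite_character :: "'a::comm_ring_1 itself \<Rightarrow> bool" where
  "finite_character _ \<longleftrightarrow>
     (\<forall>x::'a. x \<noteq> 0 \<longrightarrow> finite {M. maximal_ideal M \<and> x \<in> M})"

definition radically_perfect :: "'a::comm_ring_1 set \<Rightarrow> bool" where
  "radically_perfect I \<longleftrightarrow>
     ideal_height I = Inf {enat n | n. \<exists>\<theta>::nat \<Rightarrow> 'a.
                              radical I = radical (ideal_gen (\<theta> ` {..<n}))} \<and>
     (ideal_height I = 0 \<longrightarrow> (\<exists>\<theta>. zero_divisor \<theta> \<and> radical I = radical (ideal_gen {\<theta>})))"

end

theory Submission imports Defs begin

lemma idealD:
  assumes "is_ideal I"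
  shows "0 \<in> I" "x \<in> I \<Longrightarrow> y \<in> I \<Longrightarrow> x + y \<in> I" "x \<in> I \<Longrightarrow> r * x \<in> I"
    "x \<in> I \<Longrightarrow> x * r \<in> I" "x \<in> I \<Longrightarrow> - x \<in> I" "x \<in> I \<Longrightarrow> y \<in> I \<Longrightarrow> x - y \<in> I"
proof -
  show "0 \<in> I" using assms unfolding is_ideal_def by blast
  show "x \<in> I \<Longrightarrow> y \<in> I \<Longrightarrow> x + y \<in> I" using assms unfolding is_ideal_def by blast
  show rx: "x \<in> I \<Longrightarrow> r * x \<in> I" for x r using assms unfolding is_ideal_def by blast
  show "x \<in> I \<Longrightarrow> x * r \<in> I" using rx[of x r] by (simp add: mult.commute)
  show nx: "x \<in> I \<Longrightarrow> - x \<in> I" for x using rx[of x "-1"] by simp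
  show "x \<in> I \<Longrightarrow> y \<in> I \<Longrightarrow> x - y \<in> I" using nx[of y] assms unfolding is_ideal_def
    by (metis diff_conv_add_uminus)
qed

lemma ideal_one: "is_ideal I \<Longrightarrow> 1 \<in> I \<Longrightarrow> I = UNIV"
  using idealD(3)[of I 1] by auto

lemma ideal_gen_ideal: "is_ideal (ideal_gen S)"
  unfolding ideal_gen_def is_ideal_def by auto

lemma ideal_gen_sub: "S \<subseteq> ideal_gen S"
  unfolding ideal_gen_def by auto

lemma ideal_gen_least: "is_ideal J \<Longrightarrow> S \<subseteq> J \<Longrightarrow> ideal_gen S \<subseteq> J"
  unfolding ideal_gen_def by auto

lemma zero_ideal: "is_ideal {0::'a::comm_ring_1}"
  unfolding is_ideal_def by auto

lemma ideal_gen_empty: "ideal_gen {} = {0::'a::comm_ring_1}"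
  using ideal_gen_least[OF zero_ideal, of "{}"] idealD(1)[OF ideal_gen_ideal, of "{}::'a set"] by auto

definition pid :: "'a::comm_ring_1 \<Rightarrow> 'a set" where "pid p = {x. p dvd x}"

lemma pid_ideal: "is_ideal (pid p)"
  unfolding is_ideal_def pid_def by auto

lemma ideal_gen_single: "ideal_gen {p} = pid p"
proof
  show "ideal_gen {p} \<subseteq> pid p" by (rule ideal_gen_least[OF pid_ideal]) (auto simp: pid_def)
  show "pid p \<subseteq> ideal_gen {p}"
  proof
    fix x assume "x \<in> pid p"
    then obtain r where "x = r * p" unfolding pid_def by (auto elim!: dvdE intro: mult.commute)
    then show "x \<in> ideal_gen {p}" using idealD(3)[OF ideal_gen_ideal, of p "{p}" r] ideal_gen_sub[of "{p}"] by auto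
  qed
qed

lemma pid_sub: "is_ideal I \<Longrightarrow> p \<in> I \<Longrightarrow> pid p \<subseteq> I"
  unfolding pid_def by (auto elim!: dvdE intro: idealD(4))

lemma radical_mono: "I \<subseteq> J \<Longrightarrow> radical I \<subseteq> radical J"
  unfolding radical_def by auto

lemma radical_sub: "I \<subseteq> radical I"
  unfolding radical_def by (auto intro: exI[of _ 1])

lemma prime_power: "prime_ideal P \<Longrightarrow> x ^ n \<in> P \<Longrightarrow> x \<in> P"
proof (induction n)
  case 0 then show ?case using ideal_one[of P] unfolding prime_ideal_def by auto
next
  case (Suc n) then show ?case unfolding prime_ideal_def by auto
qed

lemma radical_prime: "prime_ideal P \<Longrightarrow> radical P = P"
  using radical_sub[of P] prime_power[of P] unfolding radical_def by auto

lemma radical_zero: "radical {0::'a::idom} = {0}"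
  unfolding radical_def by auto

lemma zero_prime: "prime_ideal {0::'a::idom}"
proof -
  have "(1::'a) \<notin> {0}" by simp
  then have "{0::'a} \<noteq> UNIV" by blast
  then show ?thesis unfolding prime_ideal_def using zero_ideal by auto
qed

lemma pid_prime:
  fixes p :: "'a::{factorial_semiring,idom}"
  assumes "prime p" shows "prime_ideal (pid p)"
proof -
  have "1 \<notin> pid p" using assms unfolding pid_def by (simp add: not_prime_unit)
  moreover have "a * b \<in> pid p \<Longrightarrow> a \<in> pid p \<or> b \<in> pid p" for a b
    using assms unfolding pid_def by (simp add: prime_dvd_mult_iff)
  ultimately show ?thesis unfolding prime_ideal_def using pid_ideal by blast
qed

lemma prime_ideal_no_unit: "prime_ideal P \<Longrightarrow> is_unit x \<Longrightarrow> x \<notin> P"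
proof
  assume P: "prime_ideal P" and u: "is_unit x" and x: "x \<in> P"
  from u obtain y where "1 = x * y" by (auto elim!: dvdE)
  moreover have "x * y \<in> P" using x P idealD(4) unfolding prime_ideal_def by blast
  ultimately have "1 \<in> P" by simp
  then show False using ideal_one[of P] P unfolding prime_ideal_def by blast
qed

lemma prime_factor_in:
  fixes x :: "'a::{factorial_semiring,idom}"
  assumes P: "prime_ideal P" and "x \<in> P" "x \<noteq> 0"
  shows "\<exists>q. prime q \<and> q dvd x \<and> q \<in> P"
  using assms(2,3)
proof (induction x rule: prime_divisors_induct)
  case zero then show ?case by simp
next
  case (unit x)
  then show ?case using prime_ideal_no_unit[OF P] by blast
next
  case (factor p x)
  show ?case
  proof (cases "p \<in> P")
    case True then show ?thesis using factor.hyps by (intro exI[of _ p]) auto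
  next
    case False
    then have "x \<in> P" using factor.prems P unfolding prime_ideal_def by blast
    moreover have "x \<noteq> 0" using factor.prems by auto
    ultimately obtain q where "prime q" "q dvd x" "q \<in> P" using factor.IH by blast
    then show ?thesis by (intro exI[of _ q]) auto
  qed
qed


definition addg :: "'a::comm_ring_1 set \<Rightarrow> 'a \<Rightarrow> 'a set" where
  "addg M a = {m + r * a | m r. m \<in> M}"

lemma addg_ideal: assumes "is_ideal M" shows "is_ideal (addg M a)"
  unfolding is_ideal_def
proof (intro conjI ballI allI)
  have "(0::'a) = 0 + 0 * a" by simp
  then show "0 \<in> addg M a" unfolding addg_def using idealD(1)[OF assms] by blast
next
  fix x y assume "x \<in> addg M a" "y \<in> addg M a"
  then obtain m r m' r' where "x = m + r * a" "y = m' + r' * a" "m \<in> M" "m' \<in> M"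
    unfolding addg_def by blast
  then have "x + y = (m + m') + (r + r') * a" "m + m' \<in> M"
    using idealD(2)[OF assms] by (auto simp: algebra_simps)
  then show "x + y \<in> addg M a" unfolding addg_def by blast
next
  fix s x assume "x \<in> addg M a"
  then obtain m r where "x = m + r * a" "m \<in> M" unfolding addg_def by blast
  then have "s * x = s * m + (s * r) * a" "s * m \<in> M"
    using idealD(3)[OF assms] by (auto simp: algebra_simps)
  then show "s * x \<in> addg M a" unfolding addg_def by blast
qed

lemma addg_sub: "is_ideal M \<Longrightarrow> M \<subseteq> addg M a"
proof
  fix x assume "x \<in> M"
  moreover have "x = x + 0 * a" by simp
  ultimately show "x \<in> addg M a" unfolding addg_def by blast
qed

lemma addg_mem: "is_ideal M \<Longrightarrow> a \<in> addg M a"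
proof -
  assume "is_ideal M"
  then have "0 \<in> M" by (rule idealD(1))
  moreover have "a = 0 + 1 * a" by simp
  ultimately show ?thesis unfolding addg_def by blast
qed

lemma prime_avoid_power:
  fixes I :: "'a::comm_ring_1 set"
  assumes I: "is_ideal I" and nx: "\<forall>n. x ^ n \<notin> I"
  shows "\<exists>Q. prime_ideal Q \<and> I \<subseteq> Q \<and> x \<notin> Q"
proof -
  define A where "A = {J. is_ideal J \<and> I \<subseteq> J \<and> (\<forall>n. x ^ n \<notin> J)}"
  have "\<forall>C\<in>chains A. \<exists>U\<in>A. \<forall>X\<in>C. X \<subseteq> U"
  proof
    fix C assume C: "C \<in> chains A"
    show "\<exists>U\<in>A. \<forall>X\<in>C. X \<subseteq> U"
    proof (cases "C = {}")
      case True then show ?thesis using I nx unfolding A_def by auto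
    next
      case False
      then obtain X0 where X0: "X0 \<in> C" by blast
      have CA: "C \<subseteq> A" using C unfolding chains_def by blast
      have ch: "\<And>X Y. X \<in> C \<Longrightarrow> Y \<in> C \<Longrightarrow> X \<subseteq> Y \<or> Y \<subseteq> X"
        using C unfolding chains_def chain_subset_def by blast
      have idX: "\<And>X. X \<in> C \<Longrightarrow> is_ideal X" using CA unfolding A_def by blast
      have "is_ideal (\<Union>C)" unfolding is_ideal_def
      proof (intro conjI ballI allI)
        show "0 \<in> \<Union>C" using X0 idealD(1)[OF idX[OF X0]] by blast
      next
        fix a b assume "a \<in> \<Union>C" "b \<in> \<Union>C"
        then obtain X Y where "a \<in> X" "b \<in> Y" "X \<in> C" "Y \<in> C" by blast
        then show "a + b \<in> \<Union>C" using ch[of X Y] idealD(2)[OF idX[of X]] idealD(2)[OF idX[of Y]]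
          by blast
      next
        fix r a assume "a \<in> \<Union>C"
        then obtain X where "a \<in> X" "X \<in> C" by blast
        then show "r * a \<in> \<Union>C" using idealD(3)[OF idX[of X]] by blast
      qed
      moreover have "I \<subseteq> \<Union>C" using X0 CA unfolding A_def by blast
      moreover have "\<forall>n. x ^ n \<notin> \<Union>C" using CA unfolding A_def by blast
      ultimately show ?thesis unfolding A_def by blast
    qed
  qed
  from Zorn_Lemma2[OF this] obtain M where MA: "M \<in> A" and Mmax: "\<forall>X\<in>A. M \<subseteq> X \<longrightarrow> X = M"
    by blast
  have M: "is_ideal M" "I \<subseteq> M" "\<forall>n. x ^ n \<notin> M" using MA unfolding A_def by auto
  have out: "\<exists>n. x ^ n \<in> addg M a" if "a \<notin> M" for a
  proof (rule ccontr)
    assume "\<not> ?thesis"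
    then have "addg M a \<in> A" unfolding A_def using addg_ideal[OF M(1)] addg_sub[OF M(1)] M(2) by blast
    then have "addg M a = M" using Mmax addg_sub[OF M(1)] by blast
    then show False using addg_mem[OF M(1), of a] that by blast
  qed
  have "prime_ideal M" unfolding prime_ideal_def
  proof (intro conjI allI impI)
    show "is_ideal M" by (rule M(1))
    show "M \<noteq> UNIV" using M(3) by (metis UNIV_I)
  next
    fix a b assume ab: "a * b \<in> M"
    show "a \<in> M \<or> b \<in> M"
    proof (rule ccontr)
      assume "\<not> ?thesis"
      then have "a \<notin> M" "b \<notin> M" by auto
      then obtain n k where "x ^ n \<in> addg M a" "x ^ k \<in> addg M b" using out by blast
      then obtain m1 r1 m2 r2 where e: "x ^ n = m1 + r1 * a" "x ^ k = m2 + r2 * b" "m1 \<in> M" "m2 \<in> M"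
        unfolding addg_def by blast
      have "x ^ (n + k) = m1 * (m2 + r2 * b) + m2 * (r1 * a) + (r1 * r2) * (a * b)"
        by (simp add: power_add e algebra_simps)
      also have "\<dots> \<in> M"
        using e(3,4) ab idealD(2,3,4)[OF M(1)] by metis
      finally show False using M(3) by blast
    qed
  qed
  moreover have "x \<notin> M" using M(3) spec[OF M(3), of 1] by simp
  ultimately show ?thesis using M(2) by blast
qed


lemma chain_le_krull: "prime_chain n (f :: nat \<Rightarrow> 'a::comm_ring_1 set) \<Longrightarrow> enat n \<le> krull_dim TYPE('a)"
  unfolding krull_dim_def by (rule Sup_upper) blast

lemma chain_le_height: "prime_chain n f \<Longrightarrow> f n = P \<Longrightarrow> enat n \<le> prime_height P"
  unfolding prime_height_def by (rule Sup_upper) blast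

lemma height_le: "(\<And>n f. prime_chain n f \<Longrightarrow> f n = P \<Longrightarrow> n \<le> k) \<Longrightarrow> prime_height P \<le> enat k"
  unfolding prime_height_def by (rule Sup_least) auto

lemma ideal_nonzero: "is_ideal Q \<Longrightarrow> Q \<noteq> {0} \<Longrightarrow> \<exists>x\<in>Q. x \<noteq> 0"
  using idealD(1) by blast

lemma K:
  fixes p :: "'a::{factorial_semiring,idom}"
  assumes p: "prime p" and Q: "prime_ideal Q" and sub: "Q \<subseteq> pid p" and ne: "Q \<noteq> pid p"
  shows "Q = {0}"
proof (rule ccontr)
  assume "Q \<noteq> {0}"
  then obtain x where "x \<in> Q" "x \<noteq> 0" using ideal_nonzero Q unfolding prime_ideal_def by blast
  then obtain q where q: "prime q" "q \<in> Q" using prime_factor_in[OF Q] by blast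
  then have "p dvd q" using sub unfolding pid_def by blast
  then have "q dvd p \<or> is_unit p" using irreducibleD'[OF prime_elem_imp_irreducible] q(1) by blast
  then have "q dvd p" using p by (simp add: not_prime_unit)
  then have "p \<in> pid q" unfolding pid_def by simp
  moreover have "pid q \<subseteq> Q" using pid_sub[of Q q] Q q(2) unfolding prime_ideal_def by blast
  ultimately have "p \<in> Q" by blast
  then have "pid p \<subseteq> Q" using pid_sub[of Q p] Q unfolding prime_ideal_def by blast
  then show False using sub ne by blast
qed

lemma exists_prime_above:
  assumes "is_ideal J" "J \<noteq> UNIV"
  shows "\<exists>Q. prime_ideal Q \<and> J \<subseteq> Q"
proof -
  have "(1::'a) \<notin> J" using ideal_one[OF assms(1)] assms(2) by blast
  then have "\<forall>n. (1::'a) ^ n \<notin> J" by simp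
  then show ?thesis using prime_avoid_power[OF assms(1)] by blast
qed

lemma pid_nonzero: "(p::'a::idom) \<noteq> 0 \<Longrightarrow> {0} \<subset> pid p"
proof -
  assume "p \<noteq> 0"
  moreover have "p \<in> pid p" "0 \<in> pid p" by (simp_all add: pid_def)
  ultimately show ?thesis by blast
qed

lemma high_max:
  fixes p :: "'a::{factorial_semiring,idom}"
  assumes kd: "krull_dim TYPE('a) = 2" and p: "prime p" and Q: "prime_ideal Q"
    and sub: "pid p \<subseteq> Q" and ne: "pid p \<noteq> Q"
  shows "maximal_ideal Q"
  unfolding maximal_ideal_def
proof (intro conjI allI impI)
  show "is_ideal Q" "Q \<noteq> UNIV" using Q unfolding prime_ideal_def by auto
next
  fix J assume J: "is_ideal J \<and> Q \<subseteq> J"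
  show "J = Q \<or> J = UNIV"
  proof (rule ccontr)
    assume "\<not> ?thesis"
    then have JQ: "J \<noteq> Q" "J \<noteq> UNIV" by auto
    obtain Q' where Q': "prime_ideal Q'" "J \<subseteq> Q'" using exists_prime_above J JQ(2) by blast
    define f where "f = (\<lambda>i::nat. if i = 0 then {0} else if i = 1 then pid p else if i = 2 then Q else Q')"
    have f: "f 0 = {0}" "f 1 = pid p" "f 2 = Q" "f 3 = Q'" unfolding f_def by simp_all
    have pp: "p \<noteq> 0" using p by auto
    have QQ': "Q \<subset> Q'" using J JQ Q' by blast
    have "prime_chain 3 f" unfolding prime_chain_def
    proof (intro conjI allI impI)
      fix i :: nat assume "i \<le> 3"
      then have "i = 0 \<or> i = 1 \<or> i = 2 \<or> i = 3" by arith
      then show "prime_ideal (f i)" using f zero_prime pid_prime[OF p] Q Q'(1) by (elim disjE) simp_all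
    next
      fix i :: nat assume "i < 3"
      then have "i = 0 \<or> i = 1 \<or> i = 2" by arith
      then show "f i \<subset> f (Suc i)" using f pid_nonzero[OF pp] sub ne QQ'
        by (elim disjE) (simp_all add: numeral_eq_Suc)
    qed
    from chain_le_krull[OF this] kd show False by (simp add: numeral_eq_enat)
  qed
qed


lemma prod_notin:
  assumes P: "prime_ideal P" and fin: "finite S"
  shows "(\<forall>i\<in>S. g i \<notin> P) \<longrightarrow> prod g S \<notin> P"
  using fin
proof (induction S rule: finite_induct)
  case empty
  have "(1::'a) \<notin> P" using P ideal_one unfolding prime_ideal_def by blast
  then show ?case by simp
next
  case (insert i S)
  show ?case
  proof
    assume h: "\<forall>j\<in>insert i S. g j \<notin> P"
    then have "prod g S \<notin> P" "g i \<notin> P" using insert.IH by auto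
    moreover have "prod g (insert i S) = g i * prod g S" using insert.hyps by simp
    ultimately show "prod g (insert i S) \<notin> P" using P unfolding prime_ideal_def by metis
  qed
qed

lemma prod_in:
  assumes M: "is_ideal M" and fin: "finite S" and i: "i \<in> S" and gi: "g i \<in> M"
  shows "prod g S \<in> M"
proof -
  have "prod g S = g i * prod g (S - {i})" using prod.remove[OF fin i] by simp
  then show ?thesis using idealD(4)[OF M gi] by simp
qed

lemma exists_b:
  fixes p :: "'a::{factorial_semiring,idom}"
  assumes fc: "finite_character TYPE('a)" and kd: "krull_dim TYPE('a) = 2"
    and p: "prime p" and P: "prime_ideal P" and sub: "pid p \<subseteq> P" and ne: "pid p \<noteq> P"
  shows "\<exists>b. radical (ideal_gen {p, b}) = P"
proof -
  have Pmax: "maximal_ideal P" using high_max[OF kd p P sub ne] .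
  have PI: "is_ideal P" using P unfolding prime_ideal_def by blast
  have pp: "p \<noteq> 0" using p by auto
  have pP: "p \<in> P" using sub unfolding pid_def by auto
  define S where "S = {M. maximal_ideal M \<and> p \<in> M}"
  have finS: "finite S" using fc pp unfolding finite_character_def S_def by blast
  define S' where "S' = S - {P}"
  have finS': "finite S'" using finS unfolding S'_def by simp
  have "\<forall>M\<in>S'. \<exists>m. m \<in> M \<and> m \<notin> P"
  proof
    fix M assume M: "M \<in> S'"
    show "\<exists>m. m \<in> M \<and> m \<notin> P"
    proof (rule ccontr)
      assume "\<not> ?thesis"
      then have "M \<subseteq> P" by blast
      moreover have "maximal_ideal M" "M \<noteq> P" using M unfolding S'_def S_def by auto
      ultimately show False using PI P unfolding maximal_ideal_def prime_ideal_def by blast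
    qed
  qed
  then obtain m where m: "\<forall>M\<in>S'. m M \<in> M \<and> m M \<notin> P" by metis
  define e where "e = prod m S'"
  have eP: "e \<notin> P" unfolding e_def using prod_notin[OF P finS', of m] m by blast
  have eM: "e \<in> M" if "M \<in> S'" for M
  proof -
    have "is_ideal M" using that unfolding S'_def S_def maximal_ideal_def by blast
    then show ?thesis unfolding e_def using prod_in[OF _ finS' that, where g=m] m that by blast
  qed
  have "addg P e = UNIV"
    using Pmax addg_ideal[OF PI, of e] addg_sub[OF PI, of e] addg_mem[OF PI, of e] eP
    unfolding maximal_ideal_def by blast
  then have "1 \<in> addg P e" by simp
  then obtain c r where cr: "1 = c + r * e" "c \<in> P" unfolding addg_def by blast
  have cM: "c \<notin> M" if "M \<in> S'" for M
  proof
    assume "c \<in> M"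
    have MI: "is_ideal M" "M \<noteq> UNIV" using that unfolding S'_def S_def maximal_ideal_def by auto
    have "c + r * e \<in> M" using idealD(2,3)[OF MI(1)] eM[OF that] \<open>c \<in> M\<close> by blast
    then have "1 \<in> M" using cr(1) by simp
    then show False using ideal_one[OF MI(1)] MI(2) by blast
  qed
  obtain d where d: "d \<in> P" "d \<notin> pid p" using sub ne by blast
  have ppr: "prime_ideal (pid p)" using pid_prime[OF p] .
  have ppI: "is_ideal (pid p)" using pid_ideal .
  define b where "b = (if c \<in> pid p then c + d * e else c)"
  have bP: "b \<in> P" unfolding b_def using cr(2) d(1) idealD(2,4)[OF PI] by auto
  have bp: "b \<notin> pid p"
  proof (cases "c \<in> pid p")
    case True
    show ?thesis
    proof
      assume "b \<in> pid p"
      then have "c + d * e \<in> pid p" using True unfolding b_def by simp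
      then have "(c + d * e) - c \<in> pid p" using idealD(6)[OF ppI] True by blast
      then have "d * e \<in> pid p" by simp
      then have "d \<in> pid p \<or> e \<in> pid p" using ppr unfolding prime_ideal_def by blast
      then show False using d(2) eP sub by blast
    qed
  next
    case False then show ?thesis unfolding b_def by simp
  qed
  have bM: "b \<notin> M" if "M \<in> S'" for M
  proof (cases "c \<in> pid p")
    case True
    show ?thesis
    proof
      assume "b \<in> M"
      have MI: "is_ideal M" using that unfolding S'_def S_def maximal_ideal_def by auto
      have "c + d * e \<in> M" using \<open>b \<in> M\<close> True unfolding b_def by simp
      moreover have "d * e \<in> M" using idealD(3)[OF MI eM[OF that]] .
      ultimately have "(c + d * e) - d * e \<in> M" using idealD(6)[OF MI] by blast
      then show False using cM[OF that] by simp
    qed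
  next
    case False then show ?thesis unfolding b_def using cM[OF that] by simp
  qed
  define I where "I = ideal_gen {p, b}"
  have II: "is_ideal I" unfolding I_def by (rule ideal_gen_ideal)
  have pbI: "p \<in> I" "b \<in> I" unfolding I_def using ideal_gen_sub[of "{p, b}"] by auto
  have "{p, b} \<subseteq> P" using pP bP by blast
  then have "I \<subseteq> P" unfolding I_def by (rule ideal_gen_least[OF PI])
  then have "radical I \<subseteq> radical P" by (rule radical_mono)
  then have "radical I \<subseteq> P" using radical_prime[OF P] by simp
  moreover have "P \<subseteq> radical I"
  proof
    fix x assume xP: "x \<in> P"
    show "x \<in> radical I"
    proof (rule ccontr)
      assume "x \<notin> radical I"
      then have "\<forall>n. x ^ n \<notin> I" unfolding radical_def by blast
      then obtain Q where Q: "prime_ideal Q" "I \<subseteq> Q" "x \<notin> Q" using prime_avoid_power[OF II] by blast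
      have QI: "is_ideal Q" using Q unfolding prime_ideal_def by blast
      have "p \<in> Q" "b \<in> Q" using Q(2) pbI by auto
      have pQ: "pid p \<subseteq> Q" using pid_sub[OF QI \<open>p \<in> Q\<close>] .
      have "pid p \<noteq> Q" using bp \<open>b \<in> Q\<close> by blast
      then have "maximal_ideal Q" using high_max[OF kd p Q(1) pQ] by blast
      moreover have "Q \<noteq> P" using Q(3) xP by blast
      ultimately have "Q \<in> S'" using \<open>p \<in> Q\<close> unfolding S'_def S_def by blast
      then show False using bM \<open>b \<in> Q\<close> by blast
    qed
  qed
  ultimately show ?thesis unfolding I_def by blast
qed


lemma ideal_height_le: "prime_ideal P \<Longrightarrow> ideal_height P \<le> prime_height P"
  unfolding ideal_height_def by (rule Inf_lower) blast

lemma ideal_height_ge: "(\<And>Q. prime_ideal Q \<Longrightarrow> I \<subseteq> Q \<Longrightarrow> k \<le> prime_height Q) \<Longrightarrow> k \<le> ideal_height I"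
  unfolding ideal_height_def by (rule Inf_greatest) blast

lemma pid_zero: "pid (0::'a::idom) = {0}"
  unfolding pid_def by auto

lemma chain_top_nonzero:
  assumes "prime_chain (Suc n) f" shows "f (Suc n) \<noteq> {0}"
proof
  assume h: "f (Suc n) = {0}"
  have "f n \<subset> f (Suc n)" "prime_ideal (f n)" using assms unfolding prime_chain_def by auto
  moreover have "0 \<in> f n" using idealD(1)[of "f n"] \<open>prime_ideal (f n)\<close> unfolding prime_ideal_def by blast
  ultimately show False using h by auto
qed

lemma chain_shift:
  assumes "prime_chain (Suc n) f" shows "prime_chain n f"
  using assms unfolding prime_chain_def by auto

lemma chain1:
  assumes "prime_ideal Q" "Q \<noteq> {0::'a::idom}"
  shows "prime_chain 1 (\<lambda>i. if i = 0 then {0} else Q)"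
  unfolding prime_chain_def
proof (intro conjI allI impI)
  fix i :: nat assume "i \<le> 1"
  then show "prime_ideal (if i = 0 then {0} else Q)" using assms zero_prime by auto
next
  fix i :: nat assume "i < 1"
  then have "i = 0" by simp
  moreover have "0 \<in> Q" using assms idealD(1) unfolding prime_ideal_def by blast
  ultimately show "(if i = 0 then {0} else Q) \<subset> (if Suc i = 0 then {0} else Q)"
    using assms(2) by auto
qed

lemma chain2:
  fixes p :: "'a::{factorial_semiring,idom}"
  assumes p: "prime p" and Q: "prime_ideal Q" and "pid p \<subset> Q"
  shows "prime_chain 2 (\<lambda>i. if i = 0 then {0} else if i = 1 then pid p else Q)"
  unfolding prime_chain_def
proof (intro conjI allI impI)
  fix i :: nat assume "i \<le> 2"
  then have "i = 0 \<or> i = 1 \<or> i = 2" by arith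
  then show "prime_ideal (if i = 0 then {0} else if i = 1 then pid p else Q)"
    using zero_prime pid_prime[OF p] Q by (elim disjE) simp_all
next
  fix i :: nat assume "i < 2"
  then have "i = 0 \<or> i = 1" by arith
  moreover have "p \<noteq> 0" using p by auto
  ultimately show "(if i = 0 then {0} else if i = 1 then pid p else Q) \<subset>
      (if Suc i = 0 then {0} else if Suc i = 1 then pid p else Q)"
    using pid_nonzero assms(3) by (elim disjE) simp_all
qed

lemma not_one:
  fixes p :: "'a::{factorial_semiring,idom}"
  assumes p: "prime p" and P: "prime_ideal P" and sub: "pid p \<subseteq> P" and ne: "pid p \<noteq> P"
    and eq: "radical P = radical (ideal_gen {a})"
  shows False
proof -
  have "P = radical (ideal_gen {a})" using eq radical_prime[OF P] by simp
  then have Pe: "P = radical (pid a)" by (simp only: ideal_gen_single)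
  have pp: "p \<noteq> 0" using p by auto
  have pP: "p \<in> P" using sub unfolding pid_def by auto
  have a0: "a \<noteq> 0"
  proof
    assume "a = 0"
    then have "P = radical (pid 0)" using Pe by simp
    also have "\<dots> = {0}" unfolding pid_zero by (rule radical_zero)
    finally have "P = {0}" .
    then show False using pP pp by simp
  qed
  have "a \<in> P" using Pe radical_sub[of "pid a"] unfolding pid_def by auto
  then obtain q where q: "prime q" "q dvd a" "q \<in> P" using prime_factor_in[OF P _ a0] by blast
  have qpr: "prime_ideal (pid q)" using pid_prime[OF q(1)] .
  have "pid a \<subseteq> pid q" using q(2) unfolding pid_def using dvd_trans by blast
  then have "radical (pid a) \<subseteq> radical (pid q)" by (rule radical_mono)
  then have "P \<subseteq> pid q" using Pe radical_prime[OF qpr] by simp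
  moreover have "pid q \<subseteq> P" using pid_sub[OF _ q(3)] P unfolding prime_ideal_def by blast
  ultimately have "P = pid q" by blast
  then have "pid p = {0}" using K[OF q(1) pid_prime[OF p]] sub ne by simp
  then show False using pid_nonzero[OF pp] by simp
qed

theorem proposition4p1:
  fixes P :: "'a::{factorial_semiring, idom} set"
  assumes "finite_character TYPE('a)"
    and "krull_dim TYPE('a) = 2"
    and "prime_ideal P"
  shows "radically_perfect P"
proof -
  note fc = assms(1) and kd = assms(2) and P = assms(3)
  have PI: "is_ideal P" using P unfolding prime_ideal_def by blast
  define A where "A = {enat n | n. \<exists>\<theta>::nat \<Rightarrow> 'a. radical P = radical (ideal_gen (\<theta> ` {..<n}))}"
  have radP: "radical P = P" using radical_prime[OF P] .
  have rz: "radical (ideal_gen ((\<theta>::nat \<Rightarrow> 'a) ` {..<0})) = {0}" for \<theta>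
    by (simp add: ideal_gen_empty radical_zero)
  have A0: "enat 0 \<in> A \<longleftrightarrow> P = {0}"
  proof
    assume "enat 0 \<in> A"
    then obtain \<theta> :: "nat \<Rightarrow> 'a" where "radical P = radical (ideal_gen (\<theta> ` {..<0}))"
      unfolding A_def by auto
    then show "P = {0}" using rz radP by simp
  next
    assume "P = {0}"
    then have "radical P = radical (ideal_gen ((\<lambda>_::nat. 0::'a) ` {..<0}))"
      using rz[of "\<lambda>_. 0"] radP by simp
    then show "enat 0 \<in> A" unfolding A_def by blast
  qed
  show ?thesis
  proof (cases "P = {0}")
    case True
    have "prime_height P \<le> enat 0"
    proof (rule height_le)
      fix n f assume "prime_chain n f" "f n = P"
      then show "n \<le> 0" using chain_top_nonzero[of "n - 1" f] True by (cases n) auto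
    qed
    then have "ideal_height P \<le> enat 0" using ideal_height_le[OF P] by (rule order_trans[rotated])
    then have h: "ideal_height P = 0" by (simp add: zero_enat_def[symmetric])
    have "Inf A \<le> enat 0" using A0 True by (intro Inf_lower) simp
    then have "Inf A = 0" by (simp add: zero_enat_def[symmetric])
    moreover have "zero_divisor (0::'a)" unfolding zero_divisor_def by (intro exI[of _ 1]) simp
    moreover have "radical P = radical (ideal_gen {0})" using True by (simp add: ideal_gen_single pid_zero)
    ultimately show ?thesis unfolding radically_perfect_def A_def[symmetric] using h by auto
  next
    case False
    then obtain x where "x \<in> P" "x \<noteq> 0" using ideal_nonzero PI by blast
    then obtain p where p: "prime p" "p \<in> P" using prime_factor_in[OF P] by blast
    have pp: "p \<noteq> 0" using p by auto
    have sub: "pid p \<subseteq> P" using pid_sub[OF PI p(2)] .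
    have Ageq1: "enat 1 \<le> y" if yA: "y \<in> A" for y
    proof -
      obtain n where yn: "y = enat n" using yA unfolding A_def by blast
      then have "enat n \<in> A" using yA by simp
      then have "n \<noteq> 0" using A0 False by auto
      then show ?thesis using yn by simp
    qed
    show ?thesis
    proof (cases "pid p = P")
      case True
      have "prime_height P \<le> enat 1"
      proof (rule height_le)
        fix n f assume ch: "prime_chain n f" and fn: "f n = P"
        show "n \<le> 1"
        proof (rule ccontr)
          assume "\<not> n \<le> 1"
          define m where "m = n - 2"
          have m: "n = Suc (Suc m)" unfolding m_def using \<open>\<not> n \<le> 1\<close> by arith
          have ch1: "\<forall>i<n. f i \<subset> f (Suc i)" "\<forall>i\<le>n. prime_ideal (f i)"
            using ch unfolding prime_chain_def by blast+
          have c1: "f (Suc m) \<subset> f (Suc (Suc m))" "prime_ideal (f (Suc m))"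
            using ch1 m by simp_all
          have "f (Suc m) \<subset> pid p" using c1(1) fn m True by simp
          then have "f (Suc m) = {0}" using K[OF p(1) c1(2)] by blast
          moreover have "prime_chain (Suc m) f" using ch m chain_shift by simp
          ultimately show False using chain_top_nonzero by blast
        qed
      qed
      then have h1: "ideal_height P \<le> enat 1" using ideal_height_le[OF P] by simp
      have h2: "enat 1 \<le> ideal_height P"
      proof (rule ideal_height_ge)
        fix Q assume Q: "prime_ideal Q" "P \<subseteq> Q"
        have "Q \<noteq> {0}" using Q(2) p(2) pp by blast
        from chain_le_height[OF chain1[OF Q(1) this]] show "enat 1 \<le> prime_height Q" by simp
      qed
      have l1: "{..<1::nat} = {0}" by auto
      have "radical P = radical (ideal_gen ((\<lambda>_::nat. p) ` {..<1}))"
        unfolding l1 by (simp add: ideal_gen_single True)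
      then have "enat 1 \<in> A" unfolding A_def by blast
      then have i1: "Inf A \<le> enat 1" by (rule Inf_lower)
      have i2: "enat 1 \<le> Inf A" by (rule Inf_greatest) (rule Ageq1)
      have "Inf A = enat 1" using i1 i2 by (rule antisym)
      moreover have "ideal_height P = enat 1" using h1 h2 by (rule antisym)
      moreover have "enat 1 \<noteq> 0" by (simp add: zero_enat_def)
      ultimately have "ideal_height P = Inf A" "ideal_height P \<noteq> 0" by simp_all
      then show ?thesis unfolding radically_perfect_def A_def[symmetric] by blast
    next
      case ne: False
      have "prime_height P \<le> enat 2"
      proof (rule height_le)
        fix n f assume ch: "prime_chain n f" and fn: "f n = P"
        show "n \<le> 2" using chain_le_krull[OF ch] kd by (simp add: numeral_eq_enat)
      qed
      then have h1: "ideal_height P \<le> enat 2" using ideal_height_le[OF P] by simp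
      have h2: "enat 2 \<le> ideal_height P"
      proof (rule ideal_height_ge)
        fix Q assume Q: "prime_ideal Q" "P \<subseteq> Q"
        have "pid p \<subset> Q" using Q(2) sub ne by blast
        from chain_le_height[OF chain2[OF p(1) Q(1) this]] show "enat 2 \<le> prime_height Q" by simp
      qed
      obtain b where b: "radical (ideal_gen {p, b}) = P" using exists_b[OF fc kd p(1) P sub ne] by blast
      have l2: "{..<2::nat} = {0, 1}" by auto
      have "(\<lambda>i::nat. if i = 0 then p else b) ` {..<2} = {p, b}"
        unfolding l2 by auto
      then have "radical P = radical (ideal_gen ((\<lambda>i::nat. if i = 0 then p else b) ` {..<2}))"
        using b radP by simp
      then have "enat 2 \<in> A" unfolding A_def by blast
      moreover have "enat 2 \<le> y" if yA: "y \<in> A" for y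
      proof -
        obtain n \<theta> where y: "y = enat n" "radical P = radical (ideal_gen (\<theta> ` {..<n}))"
          using yA unfolding A_def by blast
        have "n \<noteq> 0" using Ageq1[OF yA] y by simp
        moreover have "n \<noteq> 1"
        proof
          assume "n = 1"
          moreover have "{..<1::nat} = {0}" by auto
          ultimately have "radical P = radical (ideal_gen {\<theta> 0})" using y by simp
          then show False using not_one[OF p(1) P sub ne] by blast
        qed
        ultimately show ?thesis using y by simp
      qed
      ultimately have i1: "Inf A \<le> enat 2" "enat 2 \<le> Inf A"
        by (auto intro: Inf_lower Inf_greatest)
      have "Inf A = enat 2" using i1 by (rule antisym)
      moreover have "ideal_height P = enat 2" using h1 h2 by (rule antisym)
      moreover have "enat 2 \<noteq> 0" by (simp add: zero_enat_def)
      ultimately have "ideal_height P = Inf A" "ideal_height P \<noteq> 0" by simp_all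
      then show ?thesis unfolding radically_perfect_def A_def[symmetric] by blast
    qed
  qed
qed

end
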